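(* Let $n\ge3$, $0<\epsilon<1$, define $\alpha,\beta,\gamma,\delta$, $P$, $Q$ as in the context, and let $$h''(\rho) = \frac{\rho^{n+1} - \rho^n + \rho^n P(\rho) + \alpha + \beta\rho}{(1-\rho)\rho\,Q(\rho)}.$$ If $\epsilon>0$ is sufficiently small, then near $\rho=\epsilon$ there is a Laurent expansion $$h''(\rho) = \frac{1}{\rho-\epsilon} + \hat Q_0 + \hat Q_1(\rho-\epsilon) + \cdots$$ with real coefficients $\hat Q_0,\hat Q_1,\dots$; i.e. $h''$ has a simple pole at $\rho=\epsilon$ with residue $1$.
   Context: $D(\epsilon) = -n\epsilon^{n+2} + (n+2)\epsilon^{n+1} + n - (n+2)\epsilon$, $N(\epsilon) = -n\epsilon^{n+1} + (n+1)\epsilon^n - 1$, $K(\epsilon) = -1 + \frac{n+1}{n-1}\epsilon - \epsilon^{n-1} + \frac{n-3}{n-1}\epsilon^n$, $M(\epsilon) = \frac{\epsilon^{n+1}-1}{n(n+1)} + \frac{\epsilon-\epsilon^n}{n(n-1)}$; $\delta = \Big(\epsilon^{n-2}(1-\epsilon) - \frac{(n+2)N K}{D} + \frac{n(n-3)}{n-1}\epsilon^{n-1} - (n-1)\epsilon^{n-2} + \frac{n+1}{n-1}\Big)\Big(\frac{(n+2)N}{D}M + \frac{-(n-1)\epsilon^n + n\epsilon^{n-1}-1}{n(n-1)}\Big)^{-1}$, $\gamma = n(n+1)(n+2)(M\delta + K)/D$, $\alpha = -1 - \frac{\delta}{n(n+1)} - \frac{\gamma}{(n+1)(n+2)}$,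 $\beta = \frac{n+1}{n-1} + \frac{\delta}{n(n-1)} + \frac{\gamma}{n(n+1)}$ (denominators are nonzero for small $\epsilon$); $P(\rho) = -\frac{2n+\delta}{n(n-1)} + \frac{(\delta-\gamma)\rho}{n(n+1)} + \frac{\gamma\rho^2}{(n+1)(n+2)}$, $Q(\rho) = \rho^{n-1} - \rho^n - \rho^nP(\rho) - \alpha - \beta\rho$. *)

theory Defs
  imports Complex_Main
begin

definition Dfun :: "nat \<Rightarrow> real \<Rightarrow> real" where
  "Dfun n e = - real n * e^(n+2) + (real n + 2) * e^(n+1) + real n - (real n + 2) * e"

definition Nfun :: "nat \<Rightarrow> real \<Rightarrow> real" where
  "Nfun n e = - real n * e^(n+1) + (real n + 1) * e^n - 1"

definition Kfun :: "nat \<Rightarrow> real \<Rightarrow> real" where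
  "Kfun n e = -1 + (real n + 1) / (real n - 1) * e - e^(n-1) + (real n - 3) / (real n - 1) * e^n"

definition Mfun :: "nat \<Rightarrow> real \<Rightarrow> real" where
  "Mfun n e = (e^(n+1) - 1) / (real n * (real n + 1)) + (e - e^n) / (real n * (real n - 1))"

definition delta :: "nat \<Rightarrow> real \<Rightarrow> real" where
  "delta n e =
    (e^(n-2) * (1 - e) - (real n + 2) * Nfun n e * Kfun n e / Dfun n e
      + real n * (real n - 3) / (real n - 1) * e^(n-1) - (real n - 1) * e^(n-2)
      + (real n + 1) / (real n - 1))
    / ((real n + 2) * Nfun n e / Dfun n e * Mfun n e
      + (- (real n - 1) * e^n + real n * e^(n-1) - 1) / (real n * (real n - 1)))"

definition gamma :: "nat \<Rightarrow> real \<Rightarrow> real" where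
  "gamma n e = real n * (real n + 1) * (real n + 2) * (Mfun n e * delta n e + Kfun n e) / Dfun n e"

definition alpha :: "nat \<Rightarrow> real \<Rightarrow> real" where
  "alpha n e = -1 - delta n e / (real n * (real n + 1)) - gamma n e / ((real n + 1) * (real n + 2))"

definition beta :: "nat \<Rightarrow> real \<Rightarrow> real" where
  "beta n e = (real n + 1) / (real n - 1) + delta n e / (real n * (real n - 1)) + gamma n e / (real n * (real n + 1))"

definition Pfun :: "nat \<Rightarrow> real \<Rightarrow> real \<Rightarrow> real" where
  "Pfun n e \<rho> = - (2 * real n + delta n e) / (real n * (real n - 1))
     + (delta n e - gamma n e) * \<rho> / (real n * (real n + 1))
     + gamma n e * \<rho>^2 / ((real n + 1) * (real n + 2))"

definition Qfun :: "nat \<Rightarrow> real \<Rightarrow> real \<Rightarrow> real" where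
  "Qfun n e \<rho> = \<rho>^(n-1) - \<rho>^n - \<rho>^n * Pfun n e \<rho> - alpha n e - beta n e * \<rho>"

definition hpp :: "nat \<Rightarrow> real \<Rightarrow> real \<Rightarrow> real" where
  "hpp n e \<rho> = (\<rho>^(n+1) - \<rho>^n + \<rho>^n * Pfun n e \<rho> + alpha n e + beta n e * \<rho>)
                 / ((1 - \<rho>) * \<rho> * Qfun n e \<rho>)"

end

theory Submission
  imports Defs "HOL-Analysis.Analysis"
begin


lemma Q_lin:
  assumes n: "n \<ge> 3"
  shows "Qfun n e e = - Mfun n e * delta n e
     + Dfun n e * gamma n e / (real n * (real n + 1) * (real n + 2)) - Kfun n e"
proof -
  obtain k where k: "n = k + 3" using n by (metis add.commute le_iff_add)
  define y where "y = e^(k+1)"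
  have p: "e^(n-2) = y" "e^(n-1) = y*e" "e^n = y*e^2" "e^(n+1) = y*e^3" "e^(n+2) = y*e^4"
    by (simp_all add: k y_def power_add[symmetric] eval_nat_numeral)
  define m where "m = real n"
  have m: "m \<noteq> 0" "m - 1 \<noteq> 0" "m + 1 \<noteq> 0" "m + 2 \<noteq> 0" using n by (auto simp: m_def)
  define d where "d = delta n e"
  define g where "g = gamma n e"
  show ?thesis
    unfolding Qfun_def Pfun_def alpha_def beta_def Mfun_def Dfun_def Kfun_def p m_def[symmetric] d_def[symmetric] g_def[symmetric]
    using m apply (simp add: divide_simps)
    apply (simp add: algebra_simps power2_eq_square eval_nat_numeral)
    done
qed



definition Qd :: "nat \<Rightarrow> real \<Rightarrow> real \<Rightarrow> real" where
  "Qd n e r = (real n - 1) * r^(n-2) - real n * r^(n-1) - real n * r^(n-1) * Pfun n e r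
     - r^n * ((delta n e - gamma n e) / (real n * (real n + 1)) + 2 * gamma n e * r / ((real n + 1) * (real n + 2)))
     - beta n e"

definition Eden :: "nat \<Rightarrow> real \<Rightarrow> real" where
  "Eden n e = (- (real n - 1) * e^n + real n * e^(n-1) - 1) / (real n * (real n - 1))"

lemma Qd_lin:
  assumes n: "n \<ge> 3"
  shows "Qd n e e = delta n e * Eden n e + gamma n e * Nfun n e / (real n * (real n + 1))
     + (real n - 1) * e^(n-2) - real n * (real n - 3) / (real n - 1) * e^(n-1) - (real n + 1) / (real n - 1)"
proof -
  obtain k where k: "n = k + 3" using n by (metis add.commute le_iff_add)
  define y where "y = e^(k+1)"
  have p: "e^(n-2) = y" "e^(n-1) = y*e" "e^n = y*e^2" "e^(n+1) = y*e^3" "e^(n+2) = y*e^4"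
    by (simp_all add: k y_def power_add[symmetric] eval_nat_numeral)
  define m where "m = real n"
  have m: "m \<noteq> 0" "m - 1 \<noteq> 0" "m + 1 \<noteq> 0" "m + 2 \<noteq> 0" using n by (auto simp: m_def)
  define d where "d = delta n e"
  define g where "g = gamma n e"
  show ?thesis
    unfolding Qd_def Pfun_def alpha_def beta_def Eden_def Nfun_def p m_def[symmetric] d_def[symmetric] g_def[symmetric]
    using m apply (simp add: divide_simps)
    apply (simp add: algebra_simps power2_eq_square eval_nat_numeral)
    done
qed

lemma Q_zero:
  assumes n: "n \<ge> 3" and D: "Dfun n e \<noteq> 0"
  shows "Qfun n e e = 0"
proof -
  define c where "c = real n * (real n + 1) * (real n + 2)"
  have c: "c \<noteq> 0" using n by (simp add: c_def)
  have g: "gamma n e = c * (Mfun n e * delta n e + Kfun n e) / Dfun n e"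
    unfolding gamma_def c_def by simp
  show ?thesis unfolding Q_lin[OF n] c_def[symmetric] g using D c
    by (simp add: field_simps)
qed

lemma Qd_val:
  assumes n: "n \<ge> 3" and D: "Dfun n e \<noteq> 0"
    and den: "(real n + 2) * Nfun n e / Dfun n e * Mfun n e + Eden n e \<noteq> 0"
  shows "Qd n e e = e^(n-2) * (1 - e)"
proof -
  have m: "real n \<noteq> 0" "real n + 1 \<noteq> 0" "real n + 2 \<noteq> 0" using n by auto
  define den' where "den' = (real n + 2) * Nfun n e / Dfun n e * Mfun n e + Eden n e"
  have dd: "delta n e * den' = e^(n-2) * (1 - e) - (real n + 2) * Nfun n e * Kfun n e / Dfun n e
      + real n * (real n - 3) / (real n - 1) * e^(n-1) - (real n - 1) * e^(n-2)
      + (real n + 1) / (real n - 1)"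
    using den unfolding den'_def delta_def Eden_def by simp
  define c where "c = real n * (real n + 1)"
  have c: "c \<noteq> 0" using n by (simp add: c_def)
  have g0: "gamma n e = c * (real n + 2) * (Mfun n e * delta n e + Kfun n e) / Dfun n e"
    unfolding gamma_def c_def by simp
  have g: "gamma n e * Nfun n e / (real n * (real n + 1)) = (real n + 2) * Nfun n e * (Mfun n e * delta n e + Kfun n e) / Dfun n e"
    unfolding c_def[symmetric] g0 using c D by (simp add: field_simps)
  have "Qd n e e = delta n e * den' + (real n + 2) * Nfun n e * Kfun n e / Dfun n e
     + (real n - 1) * e^(n-2) - real n * (real n - 3) / (real n - 1) * e^(n-1) - (real n + 1) / (real n - 1)"
    unfolding Qd_lin[OF n] g den'_def using D by (simp add: field_simps)
  also have "\<dots> = e^(n-2) * (1 - e)" unfolding dd by simp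
  finally show ?thesis .
qed

lemma Q_deriv:
  assumes n: "n \<ge> 3"
  shows "(Qfun n e has_real_derivative Qd n e r) (at r)"
proof -
  define a0 where "a0 = - (2 * real n + delta n e) / (real n * (real n - 1))"
  define a1 where "a1 = (delta n e - gamma n e) / (real n * (real n + 1))"
  define a2 where "a2 = gamma n e / ((real n + 1) * (real n + 2))"
  have Pf: "Pfun n e = (\<lambda>r. a0 + a1 * r + a2 * r^2)"
    unfolding Pfun_def a0_def a1_def a2_def by (auto simp: fun_eq_iff)
  have Qf: "Qfun n e = (\<lambda>r. r^(n-1) - r^n - r^n * (a0 + a1 * r + a2 * r^2) - alpha n e - beta n e * r)"
    unfolding Qfun_def Pf by (auto simp: fun_eq_iff)
  have Qdf: "Qd n e r = (real n - 1) * r^(n-2) - real n * r^(n-1) - real n * r^(n-1) * (a0 + a1 * r + a2 * r^2)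
     - r^n * (a1 + 2 * a2 * r) - beta n e"
    unfolding Qd_def Pf a1_def a2_def by simp
  have e1: "real (n - 1) = real n - 1" "n - 1 - 1 = n - 2" "n - Suc 0 = n - 1" using n by auto
  have e2: "n - 1 - Suc 0 = n - 2" using n by auto
  have dP: "((\<lambda>r. a0 + a1 * r + a2 * r^2) has_real_derivative (a1 + 2 * a2 * r)) (at r)"
  proof -
    have a: "((\<lambda>r. a1 * r) has_real_derivative a1 * 1) (at r)" by (rule DERIV_cmult[OF DERIV_ident])
    have b: "((\<lambda>r. r^2) has_real_derivative real 2 * r^(2-1)) (at r)" using DERIV_pow[of 2 r] by simp
    have c: "((\<lambda>r. a2 * r^2) has_real_derivative a2 * (real 2 * r^(2-1))) (at r)" by (rule DERIV_cmult[OF b])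
    have "((\<lambda>r. a0 + a1 * r + a2 * r^2) has_real_derivative 0 + a1 * 1 + a2 * (real 2 * r^(2-1))) (at r)"
      by (intro DERIV_add DERIV_const a c)
    thus ?thesis by (simp add: algebra_simps)
  qed
  have d1: "((\<lambda>r. r^(n-1)) has_real_derivative real (n-1) * r^(n-1-Suc 0)) (at r)"
    by (rule DERIV_pow)
  have d2: "((\<lambda>r. r^n) has_real_derivative real n * r^(n-Suc 0)) (at r)"
    by (rule DERIV_pow)
  have d3: "((\<lambda>r. r^n * (a0 + a1 * r + a2 * r^2)) has_real_derivative
      real n * r^(n-Suc 0) * (a0 + a1 * r + a2 * r^2) + (a1 + 2 * a2 * r) * r^n) (at r)"
    by (rule DERIV_mult[OF d2 dP])
  have d4: "((\<lambda>r. beta n e * r) has_real_derivative beta n e * 1) (at r)"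
    by (rule DERIV_cmult[OF DERIV_ident])
  have d5: "((\<lambda>r. alpha n e) has_real_derivative 0) (at r)" by (rule DERIV_const)
  have "((\<lambda>r. r^(n-1) - r^n - r^n * (a0 + a1 * r + a2 * r^2) - alpha n e - beta n e * r)
     has_real_derivative real (n-1) * r^(n-1-Suc 0) - real n * r^(n-Suc 0) -
       (real n * r^(n-Suc 0) * (a0 + a1 * r + a2 * r^2) + (a1 + 2 * a2 * r) * r^n) - 0 - beta n e * 1) (at r)"
    by (intro DERIV_diff d1 d2 d3 d4 d5)
  moreover have "real (n-1) * r^(n-1-Suc 0) - real n * r^(n-Suc 0) -
       (real n * r^(n-Suc 0) * (a0 + a1 * r + a2 * r^2) + (a1 + 2 * a2 * r) * r^n) - 0 - beta n e * 1 = Qd n e r"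
    unfolding Qdf e1 e2 by (simp only: mult.commute[of "a1 + 2 * a2 * r"])
  ultimately show ?thesis unfolding Qf by simp
qed



lemma fps_nth0_exp:
  fixes F :: "real fps"
  assumes "f has_fps_expansion F" shows "fps_nth F 0 = f 0"
  using assms by (auto simp: has_fps_expansion_def eval_fps_at_0 dest: eventually_nhds_x_imp_x)

lemma fps_nth1_exp:
  fixes f :: "real \<Rightarrow> real"
  assumes fF: "f has_fps_expansion F" and fd: "(f has_real_derivative d) (at 0)"
  shows "fps_nth F 1 = d"
proof -
  have r: "fps_conv_radius F > 0" and ev: "eventually (\<lambda>z. eval_fps F z = f z) (nhds 0)"
    using fF unfolding has_fps_expansion_def by auto
  have "(eval_fps F has_real_derivative eval_fps (fps_deriv F) 0) (at 0)"
    by (rule has_field_derivative_eval_fps) (use r in \<open>simp add: zero_ereal_def\<close>)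
  moreover have "(eval_fps F has_real_derivative d) (at 0)"
    using fd DERIV_cong_ev[OF refl ev refl] by simp
  ultimately have "eval_fps (fps_deriv F) 0 = d" by (rule DERIV_unique)
  thus ?thesis by (simp add: eval_fps_at_0)
qed

lemma laurent_simple:
  fixes f g :: "real \<Rightarrow> real"
  assumes fF: "f has_fps_expansion F" and gG: "g has_fps_expansion G"
    and f0: "f 0 = 0" and fd: "(f has_real_derivative d) (at 0)" and d: "d \<noteq> 0" and g0: "g 0 = d"
  shows "\<exists>H. fps_conv_radius H > 0 \<and>
     eventually (\<lambda>t. f t \<noteq> 0 \<and> eval_fps H t = g t / f t - 1 / t) (at 0)"
proof -
  have F0: "fps_nth F 0 = 0" using fps_nth0_exp[OF fF] f0 by simp
  have F1: "fps_nth F 1 = d" by (rule fps_nth1_exp[OF fF fd])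
  have G0: "fps_nth G 0 = d" using fps_nth0_exp[OF gG] g0 by simp
  have sF: "subdegree F = 1" by (rule subdegreeI) (use F0 F1 d in auto)
  have "(\<lambda>x. if x = 0 then fps_nth F 1 else f x / x ^ 1) has_fps_expansion fps_shift 1 F"
    by (rule has_fps_expansion_shift[OF fF]) (auto simp: sF)
  hence "continuous (at 0) (\<lambda>x. if x = 0 then fps_nth F 1 else f x / x ^ 1)"
    by (rule has_fps_expansion_imp_continuous)
  hence "((\<lambda>x. if x = 0 then fps_nth F 1 else f x / x ^ 1) \<longlongrightarrow> fps_nth F 1) (at 0)"
    unfolding continuous_at by (simp only: simp_thms if_True)
  hence ev1: "eventually (\<lambda>x. (if x = 0 then fps_nth F 1 else f x / x ^ 1) \<noteq> 0) (at 0)"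
    using d F1 by (intro tendsto_imp_eventually_ne) auto
  have evx: "eventually (\<lambda>x::real. x \<noteq> 0) (at 0)" by (simp add: eventually_at_filter)
  have ev2: "eventually (\<lambda>x. f x \<noteq> 0) (at 0)"
    using ev1 evx by eventually_elim auto
  define Nf where "Nf = fps_X * G - F"
  define Df where "Df = fps_X * F"
  have Nexp: "(\<lambda>t. t * g t - f t) has_fps_expansion Nf"
    unfolding Nf_def by (intro fps_expansion_intros fF gG)
  have Dexp: "(\<lambda>t. t * f t) has_fps_expansion Df"
    unfolding Df_def by (intro fps_expansion_intros fF)
  show ?thesis
  proof (cases "Nf = 0")
    case True
    have "eventually (\<lambda>t. eval_fps Nf t = t * g t - f t) (nhds 0)"
      using Nexp by (auto simp: has_fps_expansion_def)
    hence ev3: "eventually (\<lambda>t. 0 = t * g t - f t) (at 0)"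
      using True by (auto simp: eventually_at_filter elim: eventually_mono)
    show ?thesis
    proof (intro exI[of _ 0] conjI)
      show "fps_conv_radius (0::real fps) > 0" by simp
      show "eventually (\<lambda>t. f t \<noteq> 0 \<and> eval_fps 0 t = g t / f t - 1 / t) (at 0)"
        using ev2 ev3 evx by eventually_elim (auto simp: eval_fps_def field_simps)
    qed
  next
    case False
    have Df2: "fps_nth Df 2 \<noteq> 0" using F1 d by (simp add: Df_def)
    hence Dne: "Df \<noteq> 0" by auto
    have sD: "subdegree Df = 2"
      by (rule subdegreeI[OF Df2]) (use F0 in \<open>auto simp: Df_def less_2_cases_iff\<close>)
    have sN: "subdegree Nf \<ge> 2"
      by (rule subdegree_geI[OF False]) (use F0 F1 G0 in \<open>auto simp: Nf_def less_2_cases_iff\<close>)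
    have "(\<lambda>x. if x = 0 then fps_nth Nf (subdegree Df) / fps_nth Df (subdegree Df)
                else (x * g x - f x) / (x * f x)) has_fps_expansion (Nf / Df)"
      by (rule has_fps_expansion_divide[OF Nexp Dexp _ Dne refl]) (use sN sD in simp)
    hence r: "fps_conv_radius (Nf / Df) > 0" and
      ev4: "eventually (\<lambda>x. eval_fps (Nf / Df) x = (if x = 0 then fps_nth Nf (subdegree Df) / fps_nth Df (subdegree Df)
                else (x * g x - f x) / (x * f x))) (nhds 0)"
      unfolding has_fps_expansion_def by auto
    have ev5: "eventually (\<lambda>x. eval_fps (Nf / Df) x = (x * g x - f x) / (x * f x)) (at 0)"
      using ev4 by (auto simp: eventually_at_filter elim: eventually_mono)
    show ?thesis
    proof (intro exI[of _ "Nf / Df"] conjI r)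
      show "eventually (\<lambda>t. f t \<noteq> 0 \<and> eval_fps (Nf / Df) t = g t / f t - 1 / t) (at 0)"
        using ev2 ev5 evx by eventually_elim (auto simp: field_simps)
    qed
  qed
qed


lemma Q_form: "\<exists>a0 a1 a2. Qfun n e = (\<lambda>r. r^(n-1) - r^n - r^n * (a0 + a1 * r + a2 * r^2) - alpha n e - beta n e * r)"
proof -
  define a0 where "a0 = - (2 * real n + delta n e) / (real n * (real n - 1))"
  define a1 where "a1 = (delta n e - gamma n e) / (real n * (real n + 1))"
  define a2 where "a2 = gamma n e / ((real n + 1) * (real n + 2))"
  have Pf: "Pfun n e = (\<lambda>r. a0 + a1 * r + a2 * r^2)"
    unfolding Pfun_def a0_def a1_def a2_def by (auto simp: fun_eq_iff)
  show ?thesis unfolding Qfun_def Pf by blast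
qed

lemma hpp_split:
  assumes n: "n \<ge> 3" and r: "r \<noteq> 0" "r \<noteq> 1" and Q: "Qfun n e r \<noteq> 0"
  shows "hpp n e r = r^(n-2) * (1 - r) / Qfun n e r - 1 / ((1 - r) * r)"
proof -
  obtain k where k: "n = k + 3" using n by (metis add.commute le_iff_add)
  define y where "y = r^(k+1)"
  have p: "r^(n-2) = y" "r^(n-1) = y*r" "r^n = y*r^2" "r^(n+1) = y*r^3"
    by (simp_all add: k y_def power_add[symmetric] eval_nat_numeral)
  define q where "q = Qfun n e r"
  have num: "r^(n+1) - r^n + r^n * Pfun n e r + alpha n e + beta n e * r = r^(n-1) * (1-r)^2 - q"
    unfolding q_def Qfun_def p by (simp add: algebra_simps power2_eq_square eval_nat_numeral)
  have r1: "1 - r \<noteq> 0" using r by auto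
  have q: "q \<noteq> 0" using Q by (simp add: q_def)
  have h: "hpp n e r = (r^(n-1) * (1-r)^2 - q) / ((1 - r) * r * q)"
    using num unfolding hpp_def q_def by simp
  show ?thesis unfolding h q_def[symmetric] p using r r1 q
    by (simp add: divide_simps) (simp add: algebra_simps power2_eq_square)
qed

lemma den0_ne: fixes x :: real assumes "x \<ge> 3"
  shows "(x + 2) * (- 1) / x * (- 1 / (x * (x + 1))) + - 1 / (x * (x - 1)) \<noteq> 0"
proof -
  have h: "x \<noteq> 0" "x + 1 \<noteq> 0" "x - 1 \<noteq> 0" using assms by auto
  have "(x + 2) * (- 1) / x * (- 1 / (x * (x + 1))) + - 1 / (x * (x - 1)) = -2 / (x * x * (x + 1) * (x - 1))"
    using h by (simp add: divide_simps) (simp add: algebra_simps)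
  thus ?thesis using h by simp
qed

lemma small_e:
  assumes n: "n \<ge> 3"
  shows "\<exists>e0>0. \<forall>e. 0 < e \<and> e < e0 \<longrightarrow> Dfun n e \<noteq> 0 \<and>
     (real n + 2) * Nfun n e / Dfun n e * Mfun n e + Eden n e \<noteq> 0"
proof -
  have z: "(0::real)^(n+2) = 0" "(0::real)^(n+1) = 0" "(0::real)^n = 0" "(0::real)^(n-1) = 0"
    using n by simp_all
  have D0: "Dfun n 0 = real n" unfolding Dfun_def using z by simp
  have cD: "isCont (\<lambda>e. Dfun n e) 0" unfolding Dfun_def by (intro continuous_intros)
  have cN: "isCont (\<lambda>e. Nfun n e) 0" unfolding Nfun_def by (intro continuous_intros)
  have cM: "isCont (\<lambda>e. Mfun n e) 0" unfolding Mfun_def using n by (intro continuous_intros) auto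
  have cE: "isCont (\<lambda>e. Eden n e) 0" unfolding Eden_def using n by (intro continuous_intros) auto
  have Dn: "Dfun n 0 \<noteq> 0" using D0 n by simp
  define den where "den = (\<lambda>e. (real n + 2) * Nfun n e / Dfun n e * Mfun n e + Eden n e)"
  have cden: "isCont den 0" unfolding den_def
    by (intro isCont_add isCont_mult isCont_divide continuous_const cN cD cM cE Dn)
  have N0: "Nfun n 0 = -1" unfolding Nfun_def z(2) z(3) by simp
  have M0: "Mfun n 0 = -1 / (real n * (real n + 1))" unfolding Mfun_def z(2) z(3) by simp
  have E0: "Eden n 0 = -1 / (real n * (real n - 1))" unfolding Eden_def z(3) z(4) by simp
  have "den 0 \<noteq> 0" unfolding den_def N0 M0 E0 D0
    by (rule den0_ne) (use n in simp)
  have ev1: "eventually (\<lambda>e. Dfun n e \<noteq> 0) (at 0)"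
    using cD Dn by (intro tendsto_imp_eventually_ne) (auto simp: continuous_at)
  have ev2: "eventually (\<lambda>e. den e \<noteq> 0) (at 0)"
    using cden \<open>den 0 \<noteq> 0\<close> by (intro tendsto_imp_eventually_ne) (auto simp: continuous_at)
  from eventually_conj[OF ev1 ev2] obtain d where "d > 0"
    and d: "\<And>x. x \<noteq> 0 \<Longrightarrow> dist x 0 < d \<Longrightarrow> Dfun n x \<noteq> 0 \<and> den x \<noteq> 0"
    unfolding eventually_at by auto
  show ?thesis using \<open>d > 0\<close> d unfolding den_def by (intro exI[of _ d]) (auto simp: dist_real_def)
qed

lemma has_fps_expansion_power' [fps_expansion_intros]:
  fixes F :: "real fps"
  shows "f has_fps_expansion F \<Longrightarrow> (\<lambda>x. f x ^ m) has_fps_expansion F ^ m"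
  by (induction m) (auto intro!: fps_expansion_intros)

lemma fps_shift_exp:
  fixes e :: real
  shows "(\<lambda>t. (e + t)^k) has_fps_expansion (fps_const e + fps_X)^k"
  by (intro fps_expansion_intros)

theorem lemma4p6:
  fixes n :: nat
  assumes "n \<ge> 3"
  shows "\<exists>e0>0. \<forall>e::real. 0 < e \<and> e < 1 \<and> e < e0 \<longrightarrow>
           (\<exists>(c::nat \<Rightarrow> real) r. r > 0 \<and>
              (\<forall>\<rho>::real. 0 < \<bar>\<rho> - e\<bar> \<and> \<bar>\<rho> - e\<bar> < r \<longrightarrow>
                 (\<lambda>k. c k * (\<rho> - e)^k) sums (hpp n e \<rho> - 1 / (\<rho> - e))))"
proof -
  note n = assms
  obtain e0 where e0: "e0 > 0" and e0D: "\<And>e. 0 < e \<Longrightarrow> e < e0 \<Longrightarrow> Dfun n e \<noteq> 0 \<and>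
     (real n + 2) * Nfun n e / Dfun n e * Mfun n e + Eden n e \<noteq> 0"
    using small_e[OF n] by blast
  show ?thesis
  proof (intro exI[of _ e0] conjI allI impI e0)
    fix e :: real assume "0 < e \<and> e < 1 \<and> e < e0"
    hence e: "0 < e" "e < 1" "e < e0" by auto
    from e0D[OF e(1) e(3)] have D: "Dfun n e \<noteq> 0"
      and den: "(real n + 2) * Nfun n e / Dfun n e * Mfun n e + Eden n e \<noteq> 0" by auto
    define f where "f = (\<lambda>t. Qfun n e (e + t))"
    define g where "g = (\<lambda>t::real. (e + t)^(n-2) * (1 - (e + t)))"
    define d where "d = e^(n-2) * (1 - e)"
    have d0: "d \<noteq> 0" using e by (simp add: d_def)
    have f0: "f 0 = 0" using Q_zero[OF n D] by (simp add: f_def)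
    have g0: "g 0 = d" by (simp add: g_def d_def)
    have fd: "(f has_real_derivative d) (at 0)"
    proof -
      have "((\<lambda>t. Qfun n e (e + t)) has_real_derivative Qd n e (e + 0) * 1) (at 0)"
        by (rule DERIV_chain2[OF Q_deriv[OF n]]) (auto intro!: derivative_eq_intros)
      thus ?thesis using Qd_val[OF n D den] by (simp add: f_def d_def)
    qed
    obtain a0 a1 a2 where Qf: "Qfun n e = (\<lambda>r. r^(n-1) - r^n - r^n * (a0 + a1 * r + a2 * r^2) - alpha n e - beta n e * r)"
      using Q_form by blast
    have "f has_fps_expansion
      ((fps_const e + fps_X)^(n-1) - (fps_const e + fps_X)^n - (fps_const e + fps_X)^n *
        (fps_const a0 + fps_const a1 * (fps_const e + fps_X) + fps_const a2 * (fps_const e + fps_X)^2)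
        - fps_const (alpha n e) - fps_const (beta n e) * (fps_const e + fps_X))"
      unfolding f_def Qf by (intro fps_expansion_intros fps_shift_exp)
    then obtain F where fF: "f has_fps_expansion F" by blast
    have "g has_fps_expansion (fps_const e + fps_X)^(n-2) * (1 - (fps_const e + fps_X))"
      unfolding g_def by (intro fps_expansion_intros fps_shift_exp)
    then obtain G where gG: "g has_fps_expansion G" by blast
    obtain H where Hr: "fps_conv_radius H > 0"
      and evH: "eventually (\<lambda>t. f t \<noteq> 0 \<and> eval_fps H t = g t / f t - 1 / t) (at 0)"
      using laurent_simple[OF fF gG f0 fd d0 g0] by blast
    define w where "w = (\<lambda>t::real. 1 / ((1 - (e + t)) * (e + t)))"
    have "(\<lambda>t. (1 - (e + t)) * (e + t)) has_fps_expansion (1 - (fps_const e + fps_X)) * (fps_const e + fps_X)"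
      using fps_shift_exp[of e 1] by (intro fps_expansion_intros)
    then obtain V where vV: "(\<lambda>t. (1 - (e + t)) * (e + t)) has_fps_expansion V" by blast
    have V0: "fps_nth V 0 \<noteq> 0" using fps_nth0_exp[OF vV] e by simp
    have wW: "w has_fps_expansion (1 / V)"
      unfolding w_def by (rule has_fps_expansion_divide'[OF has_fps_expansion_1 vV V0])
    hence Wr: "fps_conv_radius (1 / V) > 0" and evW0: "eventually (\<lambda>t. eval_fps (1 / V) t = w t) (nhds 0)"
      unfolding has_fps_expansion_def by auto
    have evB: "eventually (\<lambda>t. t \<in> eball 0 (fps_conv_radius H) \<and> t \<in> eball 0 (fps_conv_radius (1/V))
                 \<and> dist t 0 < min e (1 - e)) (nhds 0)"
      using Hr Wr e
      by (intro eventually_conj eventually_nhds_in_open)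
         (auto simp: zero_ereal_def eventually_nhds_metric intro!: exI[of _ "min e (1 - e)"])
    have "eventually (\<lambda>t. (f t \<noteq> 0 \<and> eval_fps H t = g t / f t - 1 / t) \<and>
        eval_fps (1 / V) t = w t \<and> (t \<in> eball 0 (fps_conv_radius H) \<and> t \<in> eball 0 (fps_conv_radius (1/V))
                 \<and> dist t 0 < min e (1 - e))) (at 0)"
      using evH evW0 evB by (intro eventually_conj) (auto simp: eventually_at_filter elim: eventually_mono)
    then obtain r where r: "r > 0" and rP: "\<And>t. t \<noteq> 0 \<Longrightarrow> dist t 0 < r \<Longrightarrow>
       (f t \<noteq> 0 \<and> eval_fps H t = g t / f t - 1 / t) \<and>
        eval_fps (1 / V) t = w t \<and> (t \<in> eball 0 (fps_conv_radius H) \<and> t \<in> eball 0 (fps_conv_radius (1/V))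
                 \<and> dist t 0 < min e (1 - e))"
      unfolding eventually_at by auto
    show "\<exists>(c::nat \<Rightarrow> real) r. r > 0 \<and>
              (\<forall>\<rho>::real. 0 < \<bar>\<rho> - e\<bar> \<and> \<bar>\<rho> - e\<bar> < r \<longrightarrow>
                 (\<lambda>k. c k * (\<rho> - e)^k) sums (hpp n e \<rho> - 1 / (\<rho> - e)))"
    proof (intro exI[of _ "\<lambda>k. fps_nth H k - fps_nth (1 / V) k"] exI[of _ r] conjI r allI impI)
      fix \<rho> :: real assume "0 < \<bar>\<rho> - e\<bar> \<and> \<bar>\<rho> - e\<bar> < r"
      define t where "t = \<rho> - e"
      have t: "t \<noteq> 0" "dist t 0 < r" using \<open>0 < \<bar>\<rho> - e\<bar> \<and> \<bar>\<rho> - e\<bar> < r\<close> by (auto simp: t_def dist_real_def)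
      note P = rP[OF t]
      have \<rho>: "\<rho> = e + t" by (simp add: t_def)
      have s1: "(\<lambda>k. fps_nth H k * t^k) sums eval_fps H t"
        by (rule sums_eval_fps) (use P in \<open>auto simp: dist_norm\<close>)
      have s2: "(\<lambda>k. fps_nth (1/V) k * t^k) sums eval_fps (1/V) t"
        by (rule sums_eval_fps) (use P in \<open>auto simp: dist_norm\<close>)
      have rr: "e + t \<noteq> 0" "e + t \<noteq> 1" using P e by (auto simp: dist_real_def)
      have fne: "Qfun n e (e + t) \<noteq> 0" using P by (simp add: f_def)
      have val: "eval_fps H t - eval_fps (1/V) t = hpp n e \<rho> - 1 / (\<rho> - e)"
        using P unfolding \<rho> hpp_split[OF n rr fne]
        by (simp add: f_def g_def w_def)
      show "(\<lambda>k. (fps_nth H k - fps_nth (1 / V) k) * (\<rho> - e)^k) sums (hpp n e \<rho> - 1 / (\<rho> - e))"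
        using sums_diff[OF s1 s2] unfolding val by (simp add: t_def[symmetric] left_diff_distrib)
    qed
  qed
qed


end
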